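(* Let $T=\{\!\{T_1,\dots,T_m\}\!\}$ where each $T_j$ is a $G_j$-join tree with $G_j$ a finite subgraph of $\mathsf{Path}_{\mathbb Z}$. Then for every $j\in[m]$, \[\Psi(T)\ge\Psi(T_j)+\vec\Delta(G_1,\dots,G_m\mid G_j).\]
   Context: Graphs are finite simple graphs without isolated vertices; $\emptyset$ is the empty graph. $\mathsf{Path}_{\mathbb Z}$ has vertex set $\mathbb Z$ and edges $\{i-1,i\}$. $\Delta(G)$ = number of connected components; $G\ominus F$ = union of components of $G$ sharing no vertex with $F$; $\vec\Delta(H_1,\dots,H_r\mid F)=\sum_{l=1}^r\Delta(H_l\ominus(F\cup H_1\cup\dots\cup H_{l-1}))$, $\vec\Delta(H_1,\dots,H_r)=\vec\Delta(H_1,\dots,H_r\mid\emptyset)$. Join trees: for finite $G\subset\mathsf{Path}_{\mathbb Z}$, a $G$-join tree is a finite rooted binary tree (each non-leaf has an ordered left and right child) with nodes labeled by subgraphs of $G$: leaves by single-edge subgraphs of $G$ or $\emptyset$, each non-leaf by the union of its children's labels, the root by $G$. $T_1\cup T_2$ is the join tree with a new root whose left subtree is $T_1$ and right subtree $T_2$. $\{\!\{T_1\}\!\}=T_1$ and $\{\!\{T_1,\dots,T_m\}\!\}=\{\!\{T_1,\dots,T_{m-1}\}\!\}\cup\{\!\{T_1,\dots,T_{m-2},T_m\}\!\}$ for $m\ge2$. For a $G$-join tree $S$ and a root-to-leaf path $b_1,\dots,b_\ell$, let $B_j$ ($j<\ell$) be the label of the child of $b_j$ other than $b_{j+1}$ and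 $B_\ell$ the label of leaf $b_\ell$; $\{B_1,\dots,B_\ell\}$ is an $S$-branch covering. $\Psi(S)$ is the maximum of $\vec\Delta(C_1,\dots,C_r)$ over all $S$-branch coverings $\mathcal C$ and all enumerations $C_1,\dots,C_r$ (without repetition) of $\mathcal C$. *)

theory Defs
  imports Main
begin

text \<open>A finite subgraph of Path_Z without isolated vertices is determined by its edge set.
  The edge {i-1,i} is encoded by the integer i; a graph is a set of such edge codes.\<close>

type_synonym pgraph = "int set"

definition edge_verts :: "int \<Rightarrow> int set" where
  "edge_verts i = {i - 1, i}"

definition verts :: "pgraph \<Rightarrow> int set" where
  "verts G = (\<Union>i\<in>G. edge_verts i)"

definition share :: "pgraph \<Rightarrow> (int \<times> int) set" where
  "share G = {(i, j). i \<in> G \<and> j \<in> G \<and> edge_verts i \<inter> edge_verts j \<noteq> {}}"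

definition component :: "pgraph \<Rightarrow> int \<Rightarrow> pgraph" where
  "component G i = {j. (i, j) \<in> (share G)\<^sup>*}"

definition components :: "pgraph \<Rightarrow> pgraph set" where
  "components G = component G ` G"

definition ncomp :: "pgraph \<Rightarrow> nat" where
  "ncomp G = card (components G)"

definition ominus :: "pgraph \<Rightarrow> pgraph \<Rightarrow> pgraph" where
  "ominus G F = \<Union>{C \<in> components G. verts C \<inter> verts F = {}}"

fun vDelta :: "pgraph list \<Rightarrow> pgraph \<Rightarrow> nat" where
  "vDelta [] F = 0"
| "vDelta (H # Hs) F = ncomp (ominus H F) + vDelta Hs (F \<union> H)"

datatype jtree = Leaf "int option" | Node jtree jtree

fun label :: "jtree \<Rightarrow> pgraph" where
  "label (Leaf None) = {}"
| "label (Leaf (Some i)) = {i}"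
| "label (Node l r) = label l \<union> label r"

definition is_join_tree :: "pgraph \<Rightarrow> jtree \<Rightarrow> bool" where
  "is_join_tree G T \<longleftrightarrow> label T = G"

function jt :: "jtree list \<Rightarrow> jtree" where
  "jt [] = Leaf None"
| "jt [t] = t"
| "jt (t1 # t2 # ts) =
     Node (jt (butlast (t1 # t2 # ts)))
          (jt (butlast (butlast (t1 # t2 # ts)) @ [last (t1 # t2 # ts)]))"
  by pat_completeness auto
termination by (relation "measure length") auto

fun branches :: "jtree \<Rightarrow> pgraph list set" where
  "branches (Leaf x) = {[label (Leaf x)]}"
| "branches (Node l r) =
     {label r # bs | bs. bs \<in> branches l} \<union> {label l # bs | bs. bs \<in> branches r}"

definition Psi :: "jtree \<Rightarrow> nat" where
  "Psi S = Max {vDelta Cs {} | Cs bs. bs \<in> branches S \<and> distinct Cs \<and> set Cs = set bs}"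

end

theory Submission
  imports Defs
begin

lemma share_sym: "(i, j) \<in> share G \<Longrightarrow> (j, i) \<in> share G"
  unfolding share_def by auto

lemma rtr_sym: "(i, j) \<in> (share G)\<^sup>* \<Longrightarrow> (j, i) \<in> (share G)\<^sup>*"
proof (induction rule: rtrancl_induct)
  case base then show ?case by simp
next
  case (step y z)
  have "(z, y) \<in> share G" using step.hyps(2) by (rule share_sym)
  then show ?case using step.IH by (rule converse_rtrancl_into_rtrancl)
qed

lemma rtr_in: "(i, j) \<in> (share G)\<^sup>* \<Longrightarrow> j = i \<or> j \<in> G"
  by (induction rule: rtrancl_induct) (auto simp: share_def)

lemma comp_sub: "i \<in> G \<Longrightarrow> component G i \<subseteq> G"
proof
  fix j assume "i \<in> G" "j \<in> component G i"
  then show "j \<in> G" using rtr_in[of i j G] unfolding component_def by auto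
qed

lemma comp_self: "i \<in> component G i"
  unfolding component_def by simp

lemma comp_eq: "x \<in> component G i \<Longrightarrow> component G x = component G i"
proof -
  assume "x \<in> component G i"
  then have a: "(i, x) \<in> (share G)\<^sup>*" unfolding component_def by simp
  then have b: "(x, i) \<in> (share G)\<^sup>*" by (rule rtr_sym)
  show ?thesis
  proof (intro set_eqI iffI)
    fix y assume "y \<in> component G x"
    then have "(x, y) \<in> (share G)\<^sup>*" unfolding component_def by simp
    with a have "(i, y) \<in> (share G)\<^sup>*" by (rule rtrancl_trans)
    then show "y \<in> component G i" unfolding component_def by simp
  next
    fix y assume "y \<in> component G i"
    then have "(i, y) \<in> (share G)\<^sup>*" unfolding component_def by simp
    with b have "(x, y) \<in> (share G)\<^sup>*" by (rule rtrancl_trans)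
    then show "y \<in> component G x" unfolding component_def by simp
  qed
qed

lemma ominus_iff:
  "x \<in> ominus G F \<longleftrightarrow> x \<in> G \<and> verts (component G x) \<inter> verts F = {}"
proof
  assume "x \<in> ominus G F"
  then obtain i where i: "i \<in> G" "x \<in> component G i" "verts (component G i) \<inter> verts F = {}"
    unfolding ominus_def components_def by auto
  then show "x \<in> G \<and> verts (component G x) \<inter> verts F = {}"
    using comp_eq[OF i(2)] comp_sub[OF i(1)] by auto
next
  assume "x \<in> G \<and> verts (component G x) \<inter> verts F = {}"
  then show "x \<in> ominus G F"
    unfolding ominus_def components_def using comp_self by blast
qed

lemma verts_mono: "A \<subseteq> B \<Longrightarrow> verts A \<subseteq> verts B"
  unfolding verts_def by auto

lemma ominus_zero: "B \<subseteq> F \<Longrightarrow> ominus B F = {}"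
proof -
  assume BF: "B \<subseteq> F"
  { fix x assume "x \<in> ominus B F"
    then have x: "x \<in> B" "verts (component B x) \<inter> verts F = {}" using ominus_iff by auto
    have "edge_verts x \<subseteq> verts (component B x)" using comp_self unfolding verts_def by auto
    moreover have "edge_verts x \<subseteq> verts F" using x BF unfolding verts_def by auto
    moreover have "edge_verts x \<noteq> {}" unfolding edge_verts_def by auto
    ultimately have False using x by blast }
  then show ?thesis by blast
qed

lemma ncomp_empty: "ncomp {} = 0"
  unfolding ncomp_def components_def by simp

lemma comp_union_sub:
  assumes "A \<subseteq> F" "x \<in> B" "verts (component B x) \<inter> verts F = {}"
  shows "component (A \<union> B) x \<subseteq> component B x"
proof
  fix z assume "z \<in> component (A \<union> B) x"
  then have "(x, z) \<in> (share (A \<union> B))\<^sup>*" unfolding component_def by simp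
  then show "z \<in> component B x"
  proof (induction rule: rtrancl_induct)
    case base then show ?case by (rule comp_self)
  next
    case (step y z)
    have yB: "y \<in> B" using comp_sub[OF assms(2)] step.IH by blast
    from step.hyps(2) have z: "z \<in> A \<union> B" "edge_verts y \<inter> edge_verts z \<noteq> {}"
      unfolding share_def by auto
    have "edge_verts y \<subseteq> verts (component B x)" using step.IH unfolding verts_def by auto
    moreover have "z \<in> A \<Longrightarrow> edge_verts z \<subseteq> verts F" using assms(1) unfolding verts_def by auto
    ultimately have "z \<in> B" using z assms(3) by blast
    then have "(y, z) \<in> share B" using yB z unfolding share_def by auto
    then show ?case using step.IH unfolding component_def by auto
  qed
qed

lemma comp_mono: "G \<subseteq> H \<Longrightarrow> component G x \<subseteq> component H x"
proof -
  assume "G \<subseteq> H"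
  then have "share G \<subseteq> share H" unfolding share_def by auto
  then show ?thesis unfolding component_def using rtrancl_mono by blast
qed

lemma ominus_union: "A \<subseteq> F \<Longrightarrow> ominus (A \<union> B) F = ominus B F"
proof (intro set_eqI iffI)
  fix x assume AF: "A \<subseteq> F" and x: "x \<in> ominus (A \<union> B) F"
  then have x1: "x \<in> A \<union> B" "verts (component (A \<union> B) x) \<inter> verts F = {}" using ominus_iff by auto
  have "edge_verts x \<subseteq> verts (component (A \<union> B) x)" using comp_self unfolding verts_def by auto
  moreover have "edge_verts x \<noteq> {}" unfolding edge_verts_def by auto
  moreover have "x \<in> A \<Longrightarrow> edge_verts x \<subseteq> verts F" using AF unfolding verts_def by auto
  ultimately have xB: "x \<in> B" using x1 by blast
  have "verts (component B x) \<subseteq> verts (component (A \<union> B) x)"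
    by (intro verts_mono comp_mono) auto
  then show "x \<in> ominus B F" using xB x1 ominus_iff by blast
next
  fix x assume AF: "A \<subseteq> F" and x: "x \<in> ominus B F"
  then have x1: "x \<in> B" "verts (component B x) \<inter> verts F = {}" using ominus_iff by auto
  have "verts (component (A \<union> B) x) \<subseteq> verts (component B x)"
    using verts_mono comp_union_sub[OF AF x1] by blast
  then show "x \<in> ominus (A \<union> B) F" using x1 ominus_iff by blast
qed

lemma vDelta_snoc: "vDelta (Hs @ [H]) F = vDelta Hs F + ncomp (ominus H (F \<union> \<Union>(set Hs)))"
  by (induction Hs arbitrary: F) (auto simp: sup_assoc)

lemma branches_union: "bs \<in> branches t \<Longrightarrow> \<Union>(set bs) = label t"
proof (induction t arbitrary: bs)
  case (Leaf x) then show ?case by simp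
next
  case (Node l r)
  from Node.prems obtain bs' where "bs = label r # bs' \<and> bs' \<in> branches l \<or> bs = label l # bs' \<and> bs' \<in> branches r"
    by auto
  then show ?case
  proof
    assume h: "bs = label r # bs' \<and> bs' \<in> branches l"
    then have "\<Union>(set bs') = label l" using Node.IH by blast
    with h show ?thesis by auto
  next
    assume h: "bs = label l # bs' \<and> bs' \<in> branches r"
    then have "\<Union>(set bs') = label r" using Node.IH by blast
    with h show ?thesis by auto
  qed
qed

lemma branches_finite: "finite (branches t)"
  by (induction t) auto

lemma branches_ne: "branches t \<noteq> {}"
  by (induction t) auto

definition PsiSet :: "jtree \<Rightarrow> nat set" where
  "PsiSet S = {vDelta Cs {} | Cs bs. bs \<in> branches S \<and> distinct Cs \<and> set Cs = set bs}"

lemma PsiSet_finite: "finite (PsiSet S)"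
proof -
  have "PsiSet S \<subseteq> (\<lambda>Cs. vDelta Cs {}) ` (\<Union>bs\<in>branches S. {Cs. set Cs \<subseteq> set bs \<and> distinct Cs})"
    unfolding PsiSet_def by blast
  moreover have "finite (\<Union>bs\<in>branches S. {Cs. set Cs \<subseteq> set bs \<and> distinct Cs})"
    using branches_finite finite_subset_distinct by blast
  ultimately show ?thesis using finite_subset by blast
qed

lemma PsiSet_ne: "PsiSet S \<noteq> {}"
proof -
  obtain bs where "bs \<in> branches S" using branches_ne by blast
  then have "vDelta (remdups bs) {} \<in> PsiSet S" unfolding PsiSet_def by fastforce
  then show ?thesis by blast
qed

lemma Psi_ge: "bs \<in> branches S \<Longrightarrow> distinct Cs \<Longrightarrow> set Cs = set bs \<Longrightarrow> vDelta Cs {} \<le> Psi S"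
  unfolding Psi_def using PsiSet_finite[of S] unfolding PsiSet_def
  by (intro Max_ge) blast+

lemma Psi_wit: "\<exists>Cs bs. bs \<in> branches S \<and> distinct Cs \<and> set Cs = set bs \<and> Psi S = vDelta Cs {}"
proof -
  have "Psi S \<in> PsiSet S" unfolding Psi_def PsiSet_def[symmetric]
    using PsiSet_finite PsiSet_ne by (rule Max_in)
  then show ?thesis unfolding PsiSet_def by blast
qed

lemma Psi_ext:
  assumes "\<forall>bs \<in> branches l. X # bs \<in> branches S"
  shows "Psi l + ncomp (ominus X (label l)) \<le> Psi S"
proof -
  obtain Cs bs where c: "bs \<in> branches l" "distinct Cs" "set Cs = set bs" "Psi l = vDelta Cs {}"
    using Psi_wit by blast
  have S: "X # bs \<in> branches S" using assms c(1) by blast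
  have U: "\<Union>(set Cs) = label l" using c(3) branches_union[OF c(1)] by simp
  show ?thesis
  proof (cases "X \<in> set bs")
    case True
    then have "X \<subseteq> label l" using U c(3) by blast
    then have "ncomp (ominus X (label l)) = 0" using ominus_zero ncomp_empty by simp
    moreover have "vDelta Cs {} \<le> Psi S" using Psi_ge[OF S c(2)] c(3) True by auto
    ultimately show ?thesis using c(4) by simp
  next
    case False
    have "vDelta (Cs @ [X]) {} \<le> Psi S" using Psi_ge[OF S] c(2,3) False by auto
    then show ?thesis using c(4) U by (simp add: vDelta_snoc)
  qed
qed

lemma Psi_left: "Psi l + ncomp (ominus (label r) (label l)) \<le> Psi (Node l r)"
  by (rule Psi_ext) auto

lemma Psi_right: "Psi r + ncomp (ominus (label l) (label r)) \<le> Psi (Node l r)"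
  by (rule Psi_ext) auto

lemma label_jt: "label (jt Ts) = (\<Union>t\<in>set Ts. label t)"
proof (induction Ts rule: jt.induct)
  case 1 then show ?case by simp
next
  case (2 t) then show ?case by simp
next
  case (3 t1 t2 ts)
  define L where "L = t1 # t2 # ts"
  have L: "set L = insert (last L) (set (butlast L))"
    unfolding L_def by (metis append_butlast_last_id list.distinct(1) set_append empty_set
        list.simps(15) Un_insert_right sup_bot.right_neutral)
  have sb: "set (butlast (butlast L)) \<subseteq> set (butlast L)" by (meson in_set_butlastD subsetI)
  have "set L = set (butlast L) \<union> set (butlast (butlast L) @ [last L])"
    using L sb by auto
  note sL = this
  have e: "jt L = Node (jt (butlast L)) (jt (butlast (butlast L) @ [last L]))"
    unfolding L_def by (rule jt.simps(3))
  have "label (jt L) = label (jt (butlast L)) \<union> label (jt (butlast (butlast L) @ [last L]))"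
    unfolding e by simp
  also have "\<dots> = (\<Union>t\<in>set (butlast L). label t) \<union> (\<Union>t\<in>set (butlast (butlast L) @ [last L]). label t)"
    using 3 unfolding L_def by simp
  also have "\<dots> = (\<Union>t\<in>set L. label t)" unfolding sL by (simp only: UN_Un)
  finally show ?case unfolding L_def .
qed

lemma jt_snoc2: "jt (P @ [a, b]) = Node (jt (P @ [a])) (jt (P @ [b]))"
proof (cases P)
  case Nil then show ?thesis by simp
next
  case (Cons x xs)
  obtain y ys where "xs @ [a, b] = y # ys" by (cases xs) auto
  then have e: "P @ [a, b] = x # y # ys" using Cons by simp
  have "butlast (P @ [a, b]) = P @ [a]" by (simp add: butlast_append)
  moreover have "butlast (butlast (P @ [a, b])) @ [last (P @ [a, b])] = P @ [b]"
    by (simp add: butlast_append)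
  ultimately show ?thesis unfolding e jt.simps(3) by (simp only: e[symmetric])
qed

lemma main:
  "Ts \<noteq> [] \<Longrightarrow> j < length Ts \<Longrightarrow>
   Psi (Ts ! j) + vDelta (map label Ts) (label (Ts ! j)) \<le> Psi (jt Ts)"
proof (induction "length Ts" arbitrary: Ts j rule: less_induct)
  case less
  show ?case
  proof (cases "length Ts = 1")
    case True
    then obtain t where "Ts = [t]" by (cases Ts) auto
    then show ?thesis using less.prems ominus_zero ncomp_empty by simp
  next
    case False
    define P where "P = butlast (butlast Ts)"
    define a where "a = last (butlast Ts)"
    define b where "b = last Ts"
    have len: "length Ts \<ge> 2" using False less.prems by (cases Ts) (auto simp: Suc_le_eq)
    have "butlast Ts \<noteq> []" using len by (cases Ts rule: rev_cases) auto
    have t1: "Ts = butlast Ts @ [b]" using less.prems(1) by (simp add: b_def)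
    have t2: "butlast Ts = P @ [a]" using \<open>butlast Ts \<noteq> []\<close> by (simp add: P_def a_def)
    have Ts: "Ts = P @ [a, b]" using t1 t2 by simp
    define UP where "UP = (\<Union>t\<in>set P. label t)"
    have jT: "jt Ts = Node (jt (P @ [a])) (jt (P @ [b]))" using Ts jt_snoc2 by simp
    have la: "label (jt (P @ [a])) = UP \<union> label a" unfolding UP_def label_jt by auto
    have lb: "label (jt (P @ [b])) = UP \<union> label b" unfolding UP_def label_jt by auto
    have mUP: "\<Union>(set (map label P)) = UP" unfolding UP_def by simp
    show ?thesis
    proof (cases "j \<le> length P")
      case True
      have jj: "Ts ! j = (P @ [a]) ! j" unfolding Ts using True
        by (simp add: nth_append)
      have IH: "Psi ((P @ [a]) ! j) + vDelta (map label (P @ [a])) (label ((P @ [a]) ! j)) \<le> Psi (jt (P @ [a]))"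
        using less.hyps[of "P @ [a]" j] True Ts by simp
      have PL: "Psi (jt (P @ [a])) + ncomp (ominus (label b) (UP \<union> label a)) \<le> Psi (jt Ts)"
        using Psi_left[of "jt (P @ [a])" "jt (P @ [b])"] unfolding jT la lb
        using ominus_union[of UP "UP \<union> label a" "label b"] by (simp add: sup_commute)
      have mem: "(P @ [a]) ! j \<in> set (P @ [a])" using True by (intro nth_mem) simp
      have inF: "label (Ts ! j) \<subseteq> UP \<union> label a" unfolding jj UP_def using mem by auto
      have X: "label (Ts ! j) \<union> \<Union>(set (map label (P @ [a]))) = UP \<union> label a"
        using inF mUP by auto
      have mT: "map label Ts = map label (P @ [a]) @ [label b]" unfolding Ts by simp
      have "vDelta (map label Ts) (label (Ts ! j)) = vDelta (map label (P @ [a])) (label (Ts ! j))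
          + ncomp (ominus (label b) (UP \<union> label a))"
        unfolding mT vDelta_snoc X ..
      then show ?thesis using IH PL jj by simp
    next
      case False
      then have jv: "j = Suc (length P)" using less.prems(2) Ts by simp
      then have jj: "Ts ! j = b" unfolding Ts by (simp add: nth_append)
      have IH: "Psi b + vDelta (map label (P @ [b])) (label b) \<le> Psi (jt (P @ [b]))"
        using less.hyps[of "P @ [b]" "length P"] Ts by simp
      have PR: "Psi (jt (P @ [b])) + ncomp (ominus (label a) (UP \<union> label b)) \<le> Psi (jt Ts)"
        using Psi_right[of "jt (P @ [b])" "jt (P @ [a])"] unfolding jT la lb
        using ominus_union[of UP "UP \<union> label b" "label a"] by (simp add: sup_commute)
      have z: "ncomp (ominus (label b) X) = 0" if "label b \<subseteq> X" for X
        using ominus_zero[OF that] ncomp_empty by simp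
      have e1: "vDelta (map label (P @ [b])) (label b) = vDelta (map label P) (label b)"
        using vDelta_snoc[of "map label P" "label b" "label b"] z by simp
      have "vDelta (map label Ts) (label b) = vDelta (map label P @ [label a]) (label b)"
        unfolding Ts using vDelta_snoc[of "map label P @ [label a]" "label b" "label b"] z by simp
      also have "\<dots> = vDelta (map label P) (label b) + ncomp (ominus (label a) (UP \<union> label b))"
        using vDelta_snoc[of "map label P" "label a" "label b"] mUP by (simp add: sup_commute)
      finally show ?thesis using IH PR jj e1 by simp
    qed
  qed
qed

theorem corollary5p5:
  fixes Ts :: "jtree list" and Gs :: "pgraph list" and j :: nat
  assumes "Ts \<noteq> []"
    and "length Gs = length Ts"
    and "\<forall>k < length Ts. finite (Gs ! k) \<and> is_join_tree (Gs ! k) (Ts ! k)"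
    and "j < length Ts"
  shows "Psi (jt Ts) \<ge> Psi (Ts ! j) + vDelta Gs (Gs ! j)"
proof -
  have "Gs = map label Ts" using assms(2,3) unfolding is_join_tree_def
    by (simp add: list_eq_iff_nth_eq)
  then show ?thesis using main[OF assms(1,4)] assms(2,4) by simp
qed

end
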